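(* Let $a,b,p$ be integers with $a,b,p>1$ and $\gcd(a,b)=1$. Then the numerical semigroup $S=\langle a^p,\ a^p+b,\ a^p+ab,\ \dots,\ a^p+a^{p-1}b\rangle$ has $\alpha$-rectangular Apéry set and is not telescopic.
   Context: A numerical semigroup is a submonoid $S$ of $(\mathbb N,+)$ with finite complement in $\mathbb N$; $g_1<\dots<g_\nu$ is its minimal system of generators, $m=g_1$, and $\mathrm{Ap}(S)=\{s\in S: s-m\notin S\}$. For $i=2,\dots,\nu$: $\alpha_i=\max\{h\in\mathbb N: hg_i\in\mathrm{Ap}(S)\}$ and $\tau_i=\min\{h\in\mathbb N: hg_i\in\langle g_1,\dots,g_{i-1}\rangle\}-1$. $\mathrm{Ap}(S)$ is $\alpha$-rectangular if $\mathrm{Ap}(S)=\{\sum_{i=2}^\nu\lambda_ig_i: 0\le\lambda_i\le\alpha_i\}$; $S$ is telescopic if $\mathrm{Ap}(S)=\{\sum_{i=2}^\nu\lambda_ig_i: 0\le\lambda_i\le\tau_i\}$. *)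

theory Defs
  imports Main
begin

inductive_set monoid_gen :: "nat set \<Rightarrow> nat set" for G :: "nat set" where
  zero: "0 \<in> monoid_gen G"
| add: "g \<in> G \<Longrightarrow> x \<in> monoid_gen G \<Longrightarrow> g + x \<in> monoid_gen G"

definition numerical_semigroup :: "nat set \<Rightarrow> bool" where
  "numerical_semigroup S \<longleftrightarrow> 0 \<in> S \<and> (\<forall>x\<in>S. \<forall>y\<in>S. x + y \<in> S) \<and> finite (UNIV - S)"

definition mingens :: "nat set \<Rightarrow> nat set" where
  "mingens S = {x \<in> S. x \<noteq> 0 \<and> \<not> (\<exists>y\<in>S. \<exists>z\<in>S. y \<noteq> 0 \<and> z \<noteq> 0 \<and> x = y + z)}"

text \<open>Embedding dimension nu and the generators g_1 < ... < g_nu (1-indexed).\<close>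
definition edim :: "nat set \<Rightarrow> nat" where
  "edim S = card (mingens S)"

definition gen :: "nat set \<Rightarrow> nat \<Rightarrow> nat" where
  "gen S i = sorted_list_of_set (mingens S) ! (i - 1)"

definition multiplicity :: "nat set \<Rightarrow> nat" where
  "multiplicity S = gen S 1"

text \<open>Apery set w.r.t. the multiplicity: s in S with s - m not in S (as an integer).\<close>
definition Apery :: "nat set \<Rightarrow> nat set" where
  "Apery S = {s \<in> S. \<not> (multiplicity S \<le> s \<and> s - multiplicity S \<in> S)}"

definition alpha :: "nat set \<Rightarrow> nat \<Rightarrow> nat" where
  "alpha S i = Max {h. h * gen S i \<in> Apery S}"

definition tau :: "nat set \<Rightarrow> nat \<Rightarrow> nat" where
  "tau S i = (LEAST h. h \<ge> 1 \<and> h * gen S i \<in> monoid_gen {gen S j | j. 1 \<le> j \<and> j < i}) - 1"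

definition box_set :: "nat set \<Rightarrow> (nat \<Rightarrow> nat) \<Rightarrow> nat set" where
  "box_set S bnd = {\<Sum>i\<in>{2..edim S}. lam i * gen S i | lam. \<forall>i\<in>{2..edim S}. lam i \<le> bnd i}"

definition alpha_rectangular :: "nat set \<Rightarrow> bool" where
  "alpha_rectangular S \<longleftrightarrow> Apery S = box_set S (alpha S)"

definition telescopic :: "nat set \<Rightarrow> bool" where
  "telescopic S \<longleftrightarrow> Apery S = box_set S (tau S)"

end

theory Submission imports Defs "HOL-Number_Theory.Cong" begin

fun ds :: "nat \<Rightarrow> nat \<Rightarrow> nat \<Rightarrow> nat" where
  "ds a 0 n = 0"
| "ds a (Suc p) n = n mod a + ds a p (n div a)"

lemma ds_zero[simp]: "ds a p 0 = 0"
  by (induction p) auto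

lemma ds_one: "a > 1 \<Longrightarrow> ds a p 1 \<le> 1"
  by (cases p) auto

lemma ds_small: "a > 1 \<Longrightarrow> c \<le> 1 \<Longrightarrow> ds a p c \<le> c"
proof (cases "c = 0")
  case False
  assume "a > 1" "c \<le> 1"
  then have "c = 1" using False by simp
  then show ?thesis using ds_one[OF \<open>a > 1\<close>, of p] by simp
qed simp

lemma ds_sub: "a > 1 \<Longrightarrow> ds a p (x + y) \<le> ds a p x + ds a p y"
proof (induction p arbitrary: x y)
  case 0 then show ?case by simp
next
  case (Suc p)
  define c where "c = (x mod a + y mod a) div a"
  have q: "(x + y) div a = x div a + y div a + c" unfolding c_def by (rule div_add1_eq)
  have r: "x mod a + y mod a = a * c + (x + y) mod a"
    unfolding c_def by (metis mod_add_eq div_mult_mod_eq mult.commute)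
  have "x mod a + y mod a < 2 * a" using Suc.prems by (simp add: add_less_mono mult_2)
  then have "c < 2" unfolding c_def by (rule less_mult_imp_div_less)
  then have c1: "c \<le> 1" by simp
  have "ds a p ((x + y) div a) \<le> ds a p (x div a + y div a) + ds a p c"
    using q Suc by simp
  also have "\<dots> \<le> ds a p (x div a) + ds a p (y div a) + c"
    using Suc.IH[OF Suc.prems, of "x div a" "y div a"] ds_small[OF Suc.prems c1, where p=p] by simp
  finally have "ds a p ((x + y) div a) \<le> ds a p (x div a) + ds a p (y div a) + c" .
  moreover have "c \<le> a * c" using Suc.prems by simp
  moreover have "ds a (Suc p) (x+y) = (x+y) mod a + ds a p ((x+y) div a)" by simp
  moreover have "ds a (Suc p) x = x mod a + ds a p (x div a)" by simp
  moreover have "ds a (Suc p) y = y mod a + ds a p (y div a)" by simp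
  ultimately show ?case using r by linarith
qed

lemma ds_pow: "a > 1 \<Longrightarrow> ds a p (a ^ k) \<le> 1"
proof (induction p arbitrary: k)
  case 0 then show ?case by simp
next
  case (Suc p)
  then show ?case
  proof (cases k)
    case 0 then show ?thesis using ds_one[OF Suc.prems, of "Suc p"] by simp
  next
    case (Suc j) then show ?thesis using Suc.prems Suc.IH[of j] by simp
  qed
qed

lemma ds_mult: "a > 1 \<Longrightarrow> ds a p (n * x) \<le> n * ds a p x"
proof (induction n)
  case 0 then show ?case by simp
next
  case (Suc n)
  have "ds a p (Suc n * x) \<le> ds a p x + ds a p (n * x)" using ds_sub[OF Suc.prems, of p x "n*x"] by simp
  then show ?case using Suc by simp
qed

lemma ds_sum: "a > 1 \<Longrightarrow> ds a p (\<Sum>k\<in>A. f k) \<le> (\<Sum>k\<in>A. ds a p (f k))"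
proof (induction A rule: infinite_finite_induct)
  case (insert x F)
  then show ?case using ds_sub[OF insert.prems, of p "f x" "sum f F"] by simp
qed auto

lemma ds_mod: "a > 1 \<Longrightarrow> ds a p (n mod a ^ p) = ds a p n"
proof (induction p arbitrary: n)
  case 0 then show ?case by simp
next
  case (Suc p)
  have e: "n mod a ^ Suc p = a * (n div a mod a ^ p) + n mod a"
    by (simp add: mod_mult2_eq)
  have m1: "n mod a ^ Suc p mod a = n mod a" using e by simp
  have d1: "n mod a ^ Suc p div a = n div a mod a ^ p" using e Suc.prems by simp
  show ?case using m1 d1 Suc by simp
qed

lemma ds_digits: "a > 1 \<Longrightarrow> (\<forall>k<p. lam k < a) \<Longrightarrow>
   ds a p (\<Sum>k<p. lam k * a ^ k) = (\<Sum>k<p. lam k) \<and> (\<Sum>k<p. lam k * a ^ k) < a ^ p"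
proof (induction p arbitrary: lam)
  case 0 then show ?case by simp
next
  case (Suc p)
  define R where "R = (\<Sum>k<p. lam (Suc k) * a ^ k)"
  have IH: "ds a p R = (\<Sum>k<p. lam (Suc k)) \<and> R < a ^ p"
    unfolding R_def using Suc.IH[OF Suc.prems(1), of "\<lambda>k. lam (Suc k)"] Suc.prems(2) by auto
  have e: "(\<Sum>k<Suc p. lam k * a ^ k) = lam 0 + a * R"
  proof -
    have "(\<Sum>k<Suc p. lam k * a ^ k) = lam 0 * a^0 + (\<Sum>k<p. lam (Suc k) * a ^ (Suc k))"
      by (rule sum.lessThan_Suc_shift)
    then show ?thesis unfolding R_def by (simp add: sum_distrib_left ac_simps)
  qed
  have l0: "lam 0 < a" using Suc.prems by auto
  have "(lam 0 + a * R) mod a = lam 0" using l0 by simp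
  moreover have "(lam 0 + a * R) div a = R" using l0 by simp
  moreover have "lam 0 + a * R < a ^ Suc p"
  proof -
    have "R + 1 \<le> a ^ p" using IH by simp
    then have h1: "a * (R + 1) \<le> a * a ^ p" by (rule mult_le_mono2)
    have h2: "lam 0 + a * R < a * (R + 1)" using l0 by simp
    show ?thesis using h1 h2 power_Suc[of a p] by linarith
  qed
  moreover have "(\<Sum>k<Suc p. lam k) = lam 0 + (\<Sum>k<p. lam (Suc k))"
    by (rule sum.lessThan_Suc_shift)
  ultimately show ?case using e IH by simp
qed

lemma mg_add: "x \<in> monoid_gen G \<Longrightarrow> y \<in> monoid_gen G \<Longrightarrow> x + y \<in> monoid_gen G"
  by (induction x rule: monoid_gen.induct) (auto simp: add.assoc intro: monoid_gen.add)

lemma mg_gen: "g \<in> G \<Longrightarrow> g \<in> monoid_gen G"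
  using monoid_gen.add[OF _ monoid_gen.zero] by fastforce

lemma mg_mult: "x \<in> monoid_gen G \<Longrightarrow> n * x \<in> monoid_gen G"
  by (induction n) (auto intro: mg_add monoid_gen.zero)

lemma mg_sum: "(\<And>k. k \<in> A \<Longrightarrow> f k \<in> monoid_gen G) \<Longrightarrow> sum f A \<in> monoid_gen G"
  by (induction A rule: infinite_finite_induct) (auto intro: mg_add monoid_gen.zero)


locale ctx = fixes a b p :: nat assumes a1: "a > 1" and b1: "b > 1" and p1: "p > 1" and cop: "gcd a b = 1"
begin

definition m where "m = a ^ p"
definition g where "g k = a ^ p + a ^ k * b"
definition G where "G = insert (a ^ p) {a ^ p + a ^ k * b | k. k < p}"
definition S where "S = monoid_gen G"
definition W where "W = {\<Sum>k<p. lam k * g k | lam. \<forall>k<p. lam k \<le> a - 1}"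

lemma G_alt: "G = insert m (g ` {..<p})" by (auto simp: G_def m_def g_def)

lemma g_eq: "g k = m + b * a ^ k" by (simp add: g_def m_def)

lemma m_pos: "m > 0" using a1 by (simp add: m_def)

lemma m_ge: "m \<ge> a + 1"
proof -
  have "a ^ 2 \<le> a ^ p" using a1 p1 by (intro power_increasing) auto
  moreover have "a + 1 \<le> a ^ 2"
  proof -
    have h: "2 * a \<le> a * a" using a1 by (intro mult_le_mono1) simp
    show ?thesis unfolding power2_eq_square using h a1 by linarith
  qed
  ultimately show ?thesis by (simp add: m_def)
qed

lemma cop_mb: "coprime m b"
proof -
  have "coprime a b" using cop by (simp add: coprime_iff_gcd_eq_1)
  then show ?thesis by (simp add: m_def coprime_power_left_iff)
qed

lemma m_S: "m \<in> S" unfolding S_def by (rule mg_gen) (simp add: G_alt)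
lemma g_S: "k < p \<Longrightarrow> g k \<in> S" unfolding S_def by (rule mg_gen) (simp add: G_alt)
lemma S_add: "x \<in> S \<Longrightarrow> y \<in> S \<Longrightarrow> x + y \<in> S" unfolding S_def by (rule mg_add)
lemma S_mult: "x \<in> S \<Longrightarrow> n * x \<in> S" unfolding S_def by (rule mg_mult)
lemma S_zero: "0 \<in> S" unfolding S_def by (rule monoid_gen.zero)
lemma S_sum: "(\<And>k. k \<in> A \<Longrightarrow> f k \<in> S) \<Longrightarrow> sum f A \<in> S" unfolding S_def by (rule mg_sum)

lemma comb_S: "c * m + (\<Sum>k<p. \<mu> k * g k) \<in> S"
  by (intro S_add S_mult m_S S_sum g_S) auto

lemma S_repr: "x \<in> S \<longleftrightarrow> (\<exists>c \<mu>. x = c * m + (\<Sum>k<p. \<mu> k * g k))"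
proof
  assume "x \<in> S"
  then show "\<exists>c \<mu>. x = c * m + (\<Sum>k<p. \<mu> k * g k)" unfolding S_def
  proof (induction rule: monoid_gen.induct)
    case zero
    show ?case by (rule exI[where x=0], rule exI[where x="\<lambda>_. 0"]) simp
  next
    case (add h x)
    then obtain c \<mu> where x: "x = c * m + (\<Sum>k<p. \<mu> k * g k)" by blast
    show ?case
    proof (cases "h = m")
      case True
      then have "h + x = (c + 1) * m + (\<Sum>k<p. \<mu> k * g k)" using x by simp
      then show ?thesis by blast
    next
      case False
      then obtain j where j: "j < p" "h = g j" using add.hyps by (auto simp: G_alt)
      define \<mu>' where "\<mu>' = (\<lambda>k. \<mu> k + (if k = j then 1 else 0))"
      have "(\<Sum>k<p. \<mu>' k * g k) = (\<Sum>k<p. \<mu> k * g k + (if k = j then g k else 0))"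
        unfolding \<mu>'_def by (intro sum.cong) auto
      also have "\<dots> = (\<Sum>k<p. \<mu> k * g k) + (\<Sum>k<p. (if k = j then g k else 0))"
        by (rule sum.distrib)
      also have "\<dots> = (\<Sum>k<p. \<mu> k * g k) + g j" using j by simp
      finally have "h + x = c * m + (\<Sum>k<p. \<mu>' k * g k)" using x j by simp
      then show ?thesis by blast
    qed
  qed
next
  assume "\<exists>c \<mu>. x = c * m + (\<Sum>k<p. \<mu> k * g k)"
  then show "x \<in> S" using comb_S by blast
qed

lemma comb_eq: "c * m + (\<Sum>k<p. \<mu> k * g k) = (c + (\<Sum>k<p. \<mu> k)) * m + b * (\<Sum>k<p. \<mu> k * a ^ k)"
  by (simp add: g_eq algebra_simps sum.distrib sum_distrib_left sum_distrib_right)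

lemma S_CM: "x \<in> S \<Longrightarrow> \<exists>C M. x = C * m + b * M \<and> ds a p M \<le> C \<and> (x \<noteq> 0 \<longrightarrow> C \<ge> 1)"
proof -
  assume "x \<in> S"
  then obtain c \<mu> where x: "x = c * m + (\<Sum>k<p. \<mu> k * g k)" using S_repr by blast
  define M where "M = (\<Sum>k<p. \<mu> k * a ^ k)"
  define C where "C = c + (\<Sum>k<p. \<mu> k)"
  have "ds a p M \<le> (\<Sum>k<p. ds a p (\<mu> k * a ^ k))" unfolding M_def by (rule ds_sum[OF a1])
  also have "\<dots> \<le> (\<Sum>k<p. \<mu> k)"
  proof (rule sum_mono)
    fix k
    have "ds a p (\<mu> k * a ^ k) \<le> \<mu> k * ds a p (a ^ k)" by (rule ds_mult[OF a1])
    also have "\<dots> \<le> \<mu> k * 1" using ds_pow[OF a1, of p k] by (intro mult_le_mono2)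
    finally show "ds a p (\<mu> k * a ^ k) \<le> \<mu> k" by simp
  qed
  finally have d: "ds a p M \<le> C" unfolding C_def by simp
  have e: "x = C * m + b * M" using x comb_eq unfolding C_def M_def by simp
  have "x \<noteq> 0 \<longrightarrow> C \<ge> 1"
  proof
    assume "x \<noteq> 0"
    show "C \<ge> 1"
    proof (rule ccontr)
      assume "\<not> C \<ge> 1"
      then have "C = 0" by simp
      then have "c + sum \<mu> {..<p} = 0" by (simp add: C_def)
      then have c0: "c = 0" and "\<forall>k\<in>{..<p}. \<mu> k = 0" by auto
      then have "(\<Sum>k<p. \<mu> k * g k) = 0" by simp
      then have "x = 0" using x c0 by simp
      then show False using \<open>x \<noteq> 0\<close> by simp
    qed
  qed
  then have "x = C * m + b * M \<and> ds a p M \<le> C \<and> (x \<noteq> 0 \<longrightarrow> C \<ge> 1)" using d e by simp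
  then show ?thesis by (intro exI)
qed

lemma S_ge: "x \<in> S \<Longrightarrow> x \<noteq> 0 \<Longrightarrow> m \<le> x"
proof -
  assume "x \<in> S" "x \<noteq> 0"
  then obtain C M where "x = C * m + b * M" "C \<ge> 1" using S_CM by blast
  then show ?thesis by (metis le_add1 le_trans mult_1 mult_le_mono1)
qed

lemma agm: "j < p \<Longrightarrow> m \<le> a * g j \<and> a * g j - m \<in> S"
proof -
  assume j: "j < p"
  obtain a' where a': "a = a' + 2" using a1 by (metis add.commute less_iff_Suc_add Suc_1 add_Suc plus_1_eq_Suc)
  have e1: "a * g j = a * m + b * a ^ Suc j" by (simp add: g_eq algebra_simps)
  from a' have "a * m = (a' + 2) * m" by (rule arg_cong[where f="\<lambda>x. x * m"])
  then have e2: "a * m = m + (a' + 1) * m" by simp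
  have e: "a * g j = m + ((a' + 1) * m + b * a ^ Suc j)" using e1 e2 by simp
  have "(a' + 1) * m + b * a ^ Suc j \<in> S"
  proof (cases "Suc j < p")
    case True
    have eq: "(a' + 1) * m + b * a ^ Suc j = a' * m + g (Suc j)" by (simp add: g_eq algebra_simps)
    show ?thesis unfolding eq by (intro S_add S_mult m_S g_S True)
  next
    case False
    then have "Suc j = p" using j by simp
    then have eq: "(a' + 1) * m + b * a ^ Suc j = (a' + 1 + b) * m" by (simp add: m_def algebra_simps)
    show ?thesis unfolding eq by (intro S_mult m_S)
  qed
  then show ?thesis using e by simp
qed

lemma Ap_W: "s \<in> S \<Longrightarrow> \<not> (m \<le> s \<and> s - m \<in> S) \<Longrightarrow> s \<in> W"
proof -
  assume sS: "s \<in> S" and nA: "\<not> (m \<le> s \<and> s - m \<in> S)"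
  then obtain c \<mu> where s: "s = c * m + (\<Sum>k<p. \<mu> k * g k)" using S_repr by blast
  have c0: "c = 0"
  proof (rule ccontr)
    assume "c \<noteq> 0"
    then obtain c' where "c = Suc c'" by (cases c) auto
    then have "s = m + (c' * m + (\<Sum>k<p. \<mu> k * g k))" using s by simp
    then show False using nA comb_S[of c' \<mu>] by simp
  qed
  have small: "\<forall>k<p. \<mu> k \<le> a - 1"
  proof (rule ccontr)
    assume "\<not> (\<forall>k<p. \<mu> k \<le> a - 1)"
    then obtain j where j: "j < p" "\<mu> j \<ge> a" by auto
    define R where "R = (\<Sum>k\<in>{..<p} - {j}. \<mu> k * g k)"
    have RS: "R \<in> S" unfolding R_def by (intro S_sum S_mult g_S) auto
    have "(\<Sum>k<p. \<mu> k * g k) = \<mu> j * g j + R" unfolding R_def using j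
      by (simp add: sum.remove)
    moreover have "\<mu> j * g j = (\<mu> j - a) * g j + a * g j" using j
      by (simp add: add_mult_distrib[symmetric])
    ultimately have "s = m + ((\<mu> j - a) * g j + (a * g j - m) + R)" using s c0 agm[OF j(1)] by simp
    moreover have "(\<mu> j - a) * g j + (a * g j - m) + R \<in> S"
      using agm[OF j(1)] RS by (intro S_add S_mult g_S j) auto
    ultimately show False using nA by simp
  qed
  show "s \<in> W" unfolding W_def using s c0 small by auto
qed

lemma W_S: "W \<subseteq> S" unfolding W_def using comb_S[of 0] by auto

lemma W_Ap: "w \<in> W \<Longrightarrow> \<not> (m \<le> w \<and> w - m \<in> S)"
proof
  assume "w \<in> W" and h: "m \<le> w \<and> w - m \<in> S"
  then obtain lam where w: "w = (\<Sum>k<p. lam k * g k)" and lam: "\<forall>k<p. lam k \<le> a - 1"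
    unfolding W_def by auto
  define L where "L = (\<Sum>k<p. lam k)"
  define N where "N = (\<Sum>k<p. lam k * a ^ k)"
  have lam': "\<forall>k<p. lam k < a" using lam a1 by (metis One_nat_def Suc_pred less_Suc_eq_le less_trans zero_less_one)
  have dN: "ds a p N = L" and Nlt: "N < m" using ds_digits[OF a1 lam'] unfolding L_def N_def m_def by auto
  have we: "w = L * m + b * N" using w comb_eq[of 0 lam] unfolding L_def N_def by simp
  obtain C M where wm: "w - m = C * m + b * M" and dM: "ds a p M \<le> C" using h S_CM by blast
  have mw: "m \<le> w" using h by simp
  have eq: "L * m + b * N = (C + 1) * m + b * M" using wm we mw by simp
  have "[b * N = b * M] (mod m)"
  proof -
    have "(L * m + b * N) mod m = ((C + 1) * m + b * M) mod m" using eq by simp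
    moreover have "(L * m + b * N) mod m = (b * N) mod m" by (rule mod_mult_self3)
    moreover have "((C + 1) * m + b * M) mod m = (b * M) mod m" by (rule mod_mult_self3)
    ultimately show ?thesis unfolding cong_def by simp
  qed
  then have "[N = M] (mod m)" using cop_mb cong_mult_lcancel_nat[of b m] by (simp add: coprime_commute)
  then have MN: "M mod m = N" using Nlt unfolding cong_def by simp
  have "ds a p M = L" using ds_mod[OF a1, of p M] MN dN by (simp add: m_def)
  then have "L \<le> C" using dM by simp
  then have Lm: "L * m \<le> C * m" by simp
  have e3: "(C + 1) * m = C * m + m" by simp
  have "b * M < b * N" using eq e3 Lm m_pos by linarith
  then have "M < N" by simp
  then have "M < m" using Nlt by simp
  then have "M = N" using MN by simp
  then show False using \<open>M < N\<close> by simp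
qed

end

context ctx begin

lemma finite_compl: "finite (UNIV - S)"
proof -
  define v where "v = g 0"
  have v: "v = m + b" unfolding v_def by (simp add: g_eq)
  have cv: "coprime v m"
  proof -
    have "coprime m (m + b)" using cop_mb by (simp add: coprime_iff_gcd_eq_1)
    then show ?thesis unfolding v by (simp add: coprime_commute)
  qed
  obtain x where x: "[v * x = Suc 0] (mod m)" using cong_solve_coprime_nat[OF cv] by blast
  have big: "n \<in> S" if n: "m * v \<le> n" for n
  proof -
    define j where "j = (x * n) mod m"
    have jm: "j < m" unfolding j_def using m_pos by simp
    have "(j * v) mod m = (x * n * v) mod m" unfolding j_def by (simp add: mod_mult_left_eq)
    also have "\<dots> = (n * (v * x)) mod m" by (simp add: ac_simps)
    also have "\<dots> = (n * ((v * x) mod m)) mod m" by (simp add: mod_mult_right_eq)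
    also have "\<dots> = (n * (Suc 0 mod m)) mod m" using x unfolding cong_def by simp
    also have "\<dots> = n mod m" by (simp only: mod_mult_right_eq) simp
    finally have c: "[n = j * v] (mod m)" unfolding cong_def by simp
    have jv: "j * v < m * v" using jm v by (intro mult_less_mono1) simp_all
    have "j * v \<le> n" using jv n by linarith
    then obtain q where "n = q * m + j * v" using c cong_le_nat by blast
    moreover have "q * m + j * g 0 \<in> S" using p1 by (intro S_add S_mult m_S g_S) simp
    ultimately show ?thesis unfolding v_def by simp
  qed
  have "UNIV - S \<subseteq> {..<m * v}" using big by (auto simp: not_less[symmetric])
  then show ?thesis by (rule finite_subset) simp
qed

lemma NS: "numerical_semigroup S"
  unfolding numerical_semigroup_def using S_zero S_add finite_compl by blast

lemma G_pos: "h \<in> G \<Longrightarrow> h \<noteq> 0"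
  using m_pos by (auto simp: G_alt g_eq)

lemma G_S: "h \<in> G \<Longrightarrow> h \<in> S"
  unfolding S_def by (rule mg_gen)

lemma g_mingen: "k < p \<Longrightarrow> y \<in> S \<Longrightarrow> z \<in> S \<Longrightarrow> y \<noteq> 0 \<Longrightarrow> z \<noteq> 0 \<Longrightarrow> g k \<noteq> y + z"
proof
  assume k: "k < p" and yS: "y \<in> S" and zS: "z \<in> S" and y0: "y \<noteq> 0" and z0: "z \<noteq> 0"
    and e: "g k = y + z"
  obtain C1 M1 where y: "y = C1 * m + b * M1" "C1 \<ge> 1" using S_CM[OF yS] y0 by blast
  obtain C2 M2 where z: "z = C2 * m + b * M2" "C2 \<ge> 1" using S_CM[OF zS] z0 by blast
  define C where "C = C1 + C2 - 1"
  define M where "M = M1 + M2"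
  have C1: "C \<ge> 1" unfolding C_def using y z by simp
  have "m + b * a ^ k = (C1 + C2) * m + b * (M1 + M2)" using e y z by (simp add: g_eq algebra_simps)
  moreover have "(C1 + C2) * m = m + C * m"
  proof -
    have "C1 + C2 = C + 1" unfolding C_def using y z by simp
    then show ?thesis by simp
  qed
  ultimately have eq: "b * a ^ k = C * m + b * M" unfolding M_def by (simp add: algebra_simps)
  have Cm: "C * m > 0" using C1 m_pos by simp
  then have "b * M < b * a ^ k" using eq by simp
  then have Mlt: "M < a ^ k" by simp
  have "b * (a ^ k - M) = C * m" using eq by (simp add: diff_mult_distrib2)
  then have "m dvd b * (a ^ k - M)" by simp
  then have d: "m dvd (a ^ k - M)" by (simp add: coprime_dvd_mult_right_iff[OF cop_mb])
  have pos: "a ^ k - M > 0" using Mlt by simp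
  have "a ^ k - M < m" unfolding m_def using power_strict_increasing[OF k a1] by simp
  then show False using dvd_imp_le[OF d pos] by simp
qed

lemma mingens_eq: "mingens S = G"
proof
  show "mingens S \<subseteq> G"
  proof
    fix x assume "x \<in> mingens S"
    then have xS: "x \<in> S" and x0: "x \<noteq> 0" and nd: "\<not> (\<exists>y\<in>S. \<exists>z\<in>S. y \<noteq> 0 \<and> z \<noteq> 0 \<and> x = y + z)"
      unfolding mingens_def by auto
    from xS[unfolded S_def] show "x \<in> G"
    proof (cases rule: monoid_gen.cases)
      case zero then show ?thesis using x0 by simp
    next
      case (add h y)
      show ?thesis
      proof (cases "y = 0")
        case True then show ?thesis using add by simp
      next
        case False
        then have False using nd add G_pos[of h] G_S[of h] unfolding S_def by blast
        then show ?thesis ..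
      qed
    qed
  qed
next
  show "G \<subseteq> mingens S"
  proof
    fix x assume xG: "x \<in> G"
    have "\<not> (\<exists>y\<in>S. \<exists>z\<in>S. y \<noteq> 0 \<and> z \<noteq> 0 \<and> x = y + z)"
    proof
      assume "\<exists>y\<in>S. \<exists>z\<in>S. y \<noteq> 0 \<and> z \<noteq> 0 \<and> x = y + z"
      then obtain y z where yz: "y \<in> S" "z \<in> S" "y \<noteq> 0" "z \<noteq> 0" "x = y + z" by blast
      show False
      proof (cases "x = m")
        case True
        then show False using S_ge[OF yz(1,3)] S_ge[OF yz(2,4)] yz(5) m_pos by simp
      next
        case False
        then obtain k where "k < p" "x = g k" using xG by (auto simp: G_alt)
        then show False using g_mingen yz by blast
      qed
    qed
    then show "x \<in> mingens S" unfolding mingens_def using G_S[OF xG] G_pos[OF xG] by blast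
  qed
qed

lemma g_mono: "i < j \<Longrightarrow> g i < g j"
  using power_strict_increasing[OF _ a1, of i j] b1 by (simp add: g_eq)

lemma sorted_G: "sorted_list_of_set G = m # map g [0..<p]"
proof (rule strict_sorted_equal)
  have "sorted_wrt (<) (map g [0..<p])" by (auto simp: sorted_wrt_iff_nth_less g_mono)
  then show "sorted_wrt (<) (m # map g [0..<p])"
    using m_pos b1 a1 by (auto simp: g_eq)
  show "sorted_wrt (<) (sorted_list_of_set G)" by (rule strict_sorted_list_of_set)
  have fin: "finite G" by (simp add: G_alt)
  show "set (sorted_list_of_set G) = set (m # map g [0..<p])"
    by (simp only: set_sorted_list_of_set[OF fin]) (auto simp: G_alt atLeast0LessThan)
qed

lemma gen1: "gen S 1 = m"
  unfolding gen_def mingens_eq sorted_G by simp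

lemma genk: "k < p \<Longrightarrow> gen S (k + 2) = g k"
  unfolding gen_def mingens_eq sorted_G by simp

lemma genk': "k < p \<Longrightarrow> gen S (Suc (Suc k)) = g k"
  using genk by simp

lemma gen2: "gen S 2 = g 0"
  using genk[of 0] p1 by (simp add: numeral_2_eq_2)

lemma edim_eq: "edim S = p + 1"
proof -
  have "card G = length (sorted_list_of_set G)" by simp
  then show ?thesis unfolding edim_def mingens_eq sorted_G by simp
qed

lemma mult_eq: "Defs.multiplicity S = m"
  unfolding Defs.multiplicity_def by (rule gen1)

lemma Apery_eq: "Apery S = W"
  unfolding Apery_def mult_eq using W_S W_Ap Ap_W by blast

lemma ss2: "2 \<le> i \<Longrightarrow> Suc (Suc (i - 2)) = i" by simp

lemma reidx: "(\<Sum>i\<in>{2..p+1}. f i) = (\<Sum>k<p. f (k + 2))"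
  by (rule sum.reindex_bij_witness[of _ "\<lambda>k. k + 2" "\<lambda>i. i - 2"]) (auto simp: ss2)

lemma box_eq: "(\<And>k. k < p \<Longrightarrow> f (k + 2) = a - 1) \<Longrightarrow> box_set S f = W"
proof -
  assume f: "\<And>k. k < p \<Longrightarrow> f (k + 2) = a - 1"
  have s: "(\<Sum>i\<in>{2..p+1}. lam i * gen S i) = (\<Sum>k<p. lam (k + 2) * g k)" for lam
    unfolding reidx by (intro sum.cong) (auto simp: genk')
  show ?thesis
  proof
    show "box_set S f \<subseteq> W"
    proof
      fix x assume "x \<in> box_set S f"
      then obtain lam where x: "x = (\<Sum>i\<in>{2..p+1}. lam i * gen S i)" and l: "\<forall>i\<in>{2..p+1}. lam i \<le> f i"
        unfolding box_set_def edim_eq by auto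
      have "\<forall>k<p. lam (k + 2) \<le> a - 1"
      proof (intro allI impI)
        fix k assume k: "k < p"
        then have mem: "k + 2 \<in> {2..p+1}" by simp
        have "lam (k + 2) \<le> f (k + 2)" using bspec[OF l mem] .
        then show "lam (k + 2) \<le> a - 1" using f[OF k] by simp
      qed
      then have "\<exists>l. x = (\<Sum>k<p. l k * g k) \<and> (\<forall>k<p. l k \<le> a - 1)"
        unfolding x s by (intro exI[of _ "\<lambda>k. lam (k + 2)"]) simp
      then show "x \<in> W" unfolding W_def by simp
    qed
  next
    show "W \<subseteq> box_set S f"
    proof
      fix x assume "x \<in> W"
      then obtain \<mu> where x: "x = (\<Sum>k<p. \<mu> k * g k)" and l: "\<forall>k<p. \<mu> k \<le> a - 1"
        unfolding W_def by auto
      define lam where "lam i = \<mu> (i - 2)" for i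
      have "x = (\<Sum>i\<in>{2..p+1}. lam i * gen S i)" unfolding s x lam_def by simp
      moreover have "\<forall>i\<in>{2..p+1}. lam i \<le> f i"
      proof
        fix i assume i: "i \<in> {2..p+1}"
        then have "i - 2 < p" "i - 2 + 2 = i" by auto
        then have i2: "i - 2 < p" and i3: "i - 2 + 2 = i" by auto
        have "f (i - 2 + 2) = a - 1" using i2 by (rule f)
        then have fi: "f i = a - 1" unfolding i3 .
        have "\<mu> (i - 2) \<le> a - 1" using l i2 by simp
        then show "lam i \<le> f i" unfolding lam_def fi .
      qed
      ultimately have "\<exists>l. x = (\<Sum>i\<in>{2..p+1}. l i * gen S i) \<and> (\<forall>i\<in>{2..p+1}. l i \<le> f i)"
        by (intro exI[of _ lam]) simp
      then show "x \<in> box_set S f" unfolding box_set_def edim_eq by simp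
    qed
  qed
qed

lemma single: "k < p \<Longrightarrow> (\<Sum>j<p. (if j = k then h else 0) * g j) = h * g k"
proof -
  assume k: "k < p"
  have "(\<Sum>j<p. (if j = k then h else 0) * g j) = (\<Sum>j<p. if j = k then h * g j else 0)"
    by (intro sum.cong) auto
  also have "\<dots> = h * g k" using k by simp
  finally show ?thesis .
qed

lemma not_Ap: "k < p \<Longrightarrow> a \<le> h \<Longrightarrow> h * g k \<notin> W"
proof
  assume k: "k < p" and h: "a \<le> h" and w: "h * g k \<in> W"
  have "h * g k = (h - a) * g k + a * g k" using h by (simp add: add_mult_distrib[symmetric])
  then have "h * g k = m + ((h - a) * g k + (a * g k - m))" using agm[OF k] by simp
  moreover have "(h - a) * g k + (a * g k - m) \<in> S" using agm[OF k] by (intro S_add S_mult g_S k) auto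
  ultimately show False using W_Ap[OF w] by simp
qed

lemma alpha_eq: "k < p \<Longrightarrow> alpha S (k + 2) = a - 1"
proof -
  assume k: "k < p"
  have "{h. h * gen S (k + 2) \<in> Apery S} = {..a - 1}"
  proof
    show "{h. h * gen S (k + 2) \<in> Apery S} \<subseteq> {..a - 1}"
    proof
      fix h assume "h \<in> {h. h * gen S (k + 2) \<in> Apery S}"
      then have hW: "h * g k \<in> W" by (simp add: genk'[OF k] Apery_eq)
      show "h \<in> {..a - 1}"
      proof (rule ccontr)
        assume "h \<notin> {..a - 1}"
        then have "a \<le> h" by simp
        then show False using not_Ap[OF k] hW by blast
      qed
    qed
    show "{..a - 1} \<subseteq> {h. h * gen S (k + 2) \<in> Apery S}"
    proof
      fix h assume "h \<in> {..a - 1}"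
      then have "\<forall>j<p. (if j = k then h else 0) \<le> a - 1" by auto
      then have "\<exists>l. (\<Sum>j<p. (if j = k then h else 0) * g j) = (\<Sum>j<p. l j * g j) \<and> (\<forall>j<p. l j \<le> a - 1)"
        by (intro exI[of _ "\<lambda>j. if j = k then h else 0"]) simp
      then have "(\<Sum>j<p. (if j = k then h else 0) * g j) \<in> W" unfolding W_def by simp
      then show "h \<in> {h. h * gen S (k + 2) \<in> Apery S}" using single[OF k] by (simp add: genk'[OF k] Apery_eq)
    qed
  qed
  moreover have "Max {..a - 1} = a - 1" by (rule Max_eqI) auto
  ultimately show ?thesis unfolding alpha_def by simp
qed

lemma alpha_rect: "alpha_rectangular S"
  unfolding alpha_rectangular_def Apery_eq using box_eq[of "alpha S"] alpha_eq by simp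

lemma mg_m: "x \<in> monoid_gen {m} \<Longrightarrow> m dvd x"
  by (induction rule: monoid_gen.induct) auto

lemma tau2: "tau S 2 \<ge> a"
proof -
  have gs: "{gen S j |j. 1 \<le> j \<and> j < 2} = {m}"
  proof (intro equalityI subsetI)
    fix x assume "x \<in> {gen S j |j. 1 \<le> j \<and> j < 2}"
    then obtain j where j: "x = gen S j" "1 \<le> j" "j < 2" by blast
    then have j1: "j = 1" by simp
    from j(1) j1 gen1 show "x \<in> {m}" by simp
  next
    fix x assume "x \<in> {m}"
    then have "x = gen S 1 \<and> 1 \<le> (1::nat) \<and> (1::nat) < 2" using gen1 by simp
    then show "x \<in> {gen S j |j. 1 \<le> j \<and> j < 2}" by blast
  qed
  have g2: "gen S 2 = g 0" by (rule gen2)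
  define P where "P h = (h \<ge> 1 \<and> h * g 0 \<in> monoid_gen {m})" for h
  have Pm: "P m" unfolding P_def using m_pos mg_mult[OF mg_gen[of m "{m}"], of "g 0"]
    by (simp add: ac_simps)
  have ge: "h \<ge> m" if "P h" for h
  proof -
    from that have h1: "h \<ge> 1" and d: "m dvd h * g 0" unfolding P_def using mg_m by auto
    have "h * g 0 = h * m + h * b" by (simp add: g_eq algebra_simps)
    then have "m dvd h * b" using d by (simp add: dvd_add_right_iff)
    then have "m dvd h" using cop_mb coprime_dvd_mult_left_iff by blast
    then show ?thesis using h1 by (simp add: dvd_imp_le)
  qed
  have "P (LEAST h. P h)" using Pm by (rule LeastI)
  then have "(LEAST h. P h) \<ge> m" by (rule ge)
  moreover have "tau S 2 = (LEAST h. P h) - 1" unfolding tau_def gs g2 P_def by simp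
  ultimately show ?thesis using m_ge by simp
qed

lemma not_tele: "\<not> telescopic S"
proof
  assume "telescopic S"
  then have eq: "W = box_set S (tau S)" unfolding telescopic_def Apery_eq .
  define lam where "lam i = (if i = 2 then a else 0)" for i :: nat
  have "(\<Sum>i\<in>{2..p+1}. lam i * gen S i) = (\<Sum>i\<in>{2..p+1}. if i = 2 then a * gen S i else 0)"
    unfolding lam_def by (intro sum.cong) auto
  also have "\<dots> = a * g 0" using p1 gen2 by simp
  finally have s: "(\<Sum>i\<in>{2..p+1}. lam i * gen S i) = a * g 0" .
  have "\<forall>i\<in>{2..p+1}. lam i \<le> tau S i" using tau2 unfolding lam_def by auto
  then have "\<exists>l. a * g 0 = (\<Sum>i\<in>{2..p+1}. l i * gen S i) \<and> (\<forall>i\<in>{2..p+1}. l i \<le> tau S i)"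
    using s by (intro exI[of _ lam]) simp
  then have "a * g 0 \<in> box_set S (tau S)" unfolding box_set_def edim_eq by simp
  then show False using eq not_Ap[of 0 a] p1 by simp
qed

end

theorem mainTheorem12:
  fixes a b p :: nat
  assumes "a > 1" and "b > 1" and "p > 1" and "gcd a b = 1"
  defines "S \<equiv> monoid_gen (insert (a ^ p) {a ^ p + a ^ k * b | k. k < p})"
  shows "numerical_semigroup S \<and> alpha_rectangular S \<and> \<not> telescopic S"
proof -
  interpret c: ctx a b p using assms by unfold_locales auto
  have "S = c.S" unfolding S_def c.S_def c.G_def by simp
  then show ?thesis using c.NS c.alpha_rect c.not_tele by simp
qed

end
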